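(* Let $k,l\ge1$ be integers, $\mu>0$, $\lambda_1,\dots,\lambda_l>0$, $\Lambda=\sum_{m=1}^l\lambda_m$, $c_m=\lambda_m/\Lambda$, $\theta>0$, $\alpha\in(0,1)$, and $\psi_{\theta,\alpha}(z)=(z+\theta)^\alpha-\theta^\alpha$. Let $p_0(t)$ be the zero state-phase probability of the Erlang queue with multiple arrivals. Then for every $r\in\mathbb{N}_0$ and $z>0$, \begin{equation*} \int_{0}^{\infty}\int_{0}^{s}p_{0}(t)(s-t)^{r}e^{-(\Lambda+k\mu)(s-t)}e^{-s\psi_{\theta,\alpha}(z)}\,dt\,ds=\sum_{h=1}^{\infty}\sum_{w=0}^{\infty}\sum_{\substack{\mathbf m'\in\mathbb N_0^l\\ m'_1+\dots+m'_l=w}}\frac{C_{h,w}^{0}(\mathbf{m}')\,\Gamma(r+1)}{(\Lambda+k\mu+\psi_{\theta,\alpha}(z))^{\gamma_{h,w}^{0}(\mathbf{m}')+r+1}}. \end{equation*}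
   Context: Erlang queue with multiple arrivals: $\{\mathcal{Q}(t)\}_{t\ge0}$ is the continuous-time Markov chain on $\{(0,0)\}\cup S$, $S=\{(n,s)\in\mathbb{N}\times\mathbb{N}: n\ge1,\ 1\le s\le k\}$, started at $(0,0)$, with transition rates: $(0,0)\to(m,k)$ at rate $\lambda_m$; $(n,s)\to(n+m,s)$ at rate $\lambda_m$ ($m=1,\dots,l$); $(n,s)\to(n,s-1)$ at rate $k\mu$ for $s\ge2$; $(n,1)\to(n-1,k)$ at rate $k\mu$ for $n\ge2$; $(1,1)\to(0,0)$ at rate $k\mu$. $p_0(t)=\Pr(\mathcal Q(t)=(0,0)\mid\mathcal Q(0)=(0,0))$. Notation: for $h\ge1$, $w\ge0$, $\mathbf m'\in\mathbb N_0^l$: $\gamma_{h,w}^{0}(\mathbf{m}')=h+w+k\sum_{j=1}^{l}jm'_{j}$ and $C_{h,w}^{0}(\mathbf{m}')=h\Lambda^{w}\Big(\prod_{i=1}^{l}\frac{c_{i}^{m'_{i}}}{m'_{i}!}\Big)\frac{(k\mu)^{\gamma_{h,w}^{0}(\mathbf{m}')-w-1}}{(\gamma_{h,w}^{0}(\mathbf{m}')-w)!}(\gamma_{h,w}^{0}(\mathbf{m}')-1)!$. *)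

theory Defs
  imports "HOL-Analysis.Analysis"
begin

text \<open>States of the Erlang queue: (0,0) and (n,s) with n \<ge> 1, 1 \<le> s \<le> k.\<close>
type_synonym qstate = "nat \<times> nat"

definition Lam :: "nat \<Rightarrow> (nat \<Rightarrow> real) \<Rightarrow> real" where
  "Lam l lam = (\<Sum>m=1..l. lam m)"

definition jumps :: "nat \<Rightarrow> nat \<Rightarrow> real \<Rightarrow> (nat \<Rightarrow> real) \<Rightarrow> qstate \<Rightarrow> (qstate \<times> real) list" where
  "jumps k l mu lam x = (case x of (n, s) \<Rightarrow>
     if n = 0 then
       (if s = 0 then map (\<lambda>m. ((m, k), lam m)) [1..<l+1] else [])
     else if 1 \<le> s \<and> s \<le> k then
       map (\<lambda>m. ((n + m, s), lam m)) [1..<l+1] @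
       [(if s \<ge> 2 then (n, s - 1) else if n \<ge> 2 then (n - 1, k) else (0, 0), real k * mu)]
     else [])"

text \<open>n-step transition probabilities of the uniformized chain (uniformization rate Lambda + k mu).\<close>
fun kpow :: "nat \<Rightarrow> nat \<Rightarrow> real \<Rightarrow> (nat \<Rightarrow> real) \<Rightarrow> nat \<Rightarrow> qstate \<Rightarrow> qstate \<Rightarrow> real" where
  "kpow k l mu lam 0 x y = (if x = y then 1 else 0)"
| "kpow k l mu lam (Suc n) x y =
     (let q = Lam l lam + real k * mu; js = jumps k l mu lam x in
      (1 - sum_list (map snd js) / q) * kpow k l mu lam n x y
      + sum_list (map (\<lambda>(z, r). r / q * kpow k l mu lam n z y) js))"

text \<open>p_0(t) = Pr(Q(t) = (0,0) | Q(0) = (0,0)), via the uniformization representation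
  of the transition function exp(tQ) of the bounded-rate chain.\<close>
definition p0 :: "nat \<Rightarrow> nat \<Rightarrow> real \<Rightarrow> (nat \<Rightarrow> real) \<Rightarrow> real \<Rightarrow> real" where
  "p0 k l mu lam t = (let q = Lam l lam + real k * mu in
     (\<Sum>n. exp (- q * t) * (q * t) ^ n / fact n * kpow k l mu lam n (0, 0) (0, 0)))"

definition psi :: "real \<Rightarrow> real \<Rightarrow> real \<Rightarrow> real" where
  "psi theta alpha z = (z + theta) powr alpha - theta powr alpha"

definition comps :: "nat \<Rightarrow> nat \<Rightarrow> (nat \<Rightarrow> nat) set" where
  "comps l w = {m. (\<forall>i. i \<notin> {1..l} \<longrightarrow> m i = 0) \<and> (\<Sum>i=1..l. m i) = w}"

definition gamma0 :: "nat \<Rightarrow> nat \<Rightarrow> nat \<Rightarrow> nat \<Rightarrow> (nat \<Rightarrow> nat) \<Rightarrow> nat" where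
  "gamma0 k l h w m = h + w + k * (\<Sum>j=1..l. j * m j)"

definition C0 :: "nat \<Rightarrow> nat \<Rightarrow> real \<Rightarrow> (nat \<Rightarrow> real) \<Rightarrow> nat \<Rightarrow> nat \<Rightarrow> (nat \<Rightarrow> nat) \<Rightarrow> real" where
  "C0 k l mu lam h w m = (let g = gamma0 k l h w m in
     real h * Lam l lam ^ w * (\<Prod>i=1..l. (lam i / Lam l lam) ^ m i / fact (m i))
     * (real k * mu) ^ (g - w - 1) / fact (g - w) * fact (g - 1))"

end

theory Submission
  imports Defs "HOL-Probability.Distributions"
begin


lemma finite_supp_bounded:
  assumes "finite A"
  shows "finite {m::nat\<Rightarrow>nat. (\<forall>i. i \<notin> A \<longrightarrow> m i = 0) \<and> (\<forall>i. m i \<le> n)}"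
proof -
  have "{m::nat\<Rightarrow>nat. (\<forall>i. i \<notin> A \<longrightarrow> m i = 0) \<and> (\<forall>i. m i \<le> n)}
        \<subseteq> (\<lambda>f i. if i \<in> A then f i else 0) ` (A \<rightarrow>\<^sub>E {..n})"
  proof
    fix m assume m: "m \<in> {m::nat\<Rightarrow>nat. (\<forall>i. i \<notin> A \<longrightarrow> m i = 0) \<and> (\<forall>i. m i \<le> n)}"
    have "m = (\<lambda>i. if i \<in> A then restrict m A i else 0)" using m by (auto simp: fun_eq_iff)
    moreover have "restrict m A \<in> A \<rightarrow>\<^sub>E {..n}" using m by auto
    ultimately show "m \<in> (\<lambda>f i. if i \<in> A then f i else 0) ` (A \<rightarrow>\<^sub>E {..n})" by blast
  qed
  moreover have "finite ((\<lambda>f i. if i \<in> A then f i else 0) ` (A \<rightarrow>\<^sub>E {..n}))"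
    using assms by (intro finite_imageI finite_PiE) auto
  ultimately show ?thesis by (rule finite_subset)
qed

locale EQ =
  fixes k l :: nat and mu :: real and lam :: "nat \<Rightarrow> real"
  assumes k1: "k \<ge> 1" and mu: "mu > 0" and lam: "\<forall>m\<in>{1..l}. lam m > 0"
begin

definition a :: real where "a = real k * mu"
definition beta :: "nat \<Rightarrow> real" where "beta i = (if i = 0 then a else lam i)"
definition vv :: "nat \<Rightarrow> int" where "vv i = (if i = 0 then -1 else int (i * k))"
definition Comp :: "nat \<Rightarrow> (nat \<Rightarrow> nat) set" where
  "Comp n = {m. (\<forall>i. i \<notin> {..l} \<longrightarrow> m i = 0) \<and> sum m {..l} = n}"
definition Q :: "(nat \<Rightarrow> nat) \<Rightarrow> real" where
  "Q m = (\<Prod>i\<le>l. beta i ^ m i / fact (m i))"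
definition dep :: "(nat \<Rightarrow> nat) \<Rightarrow> int" where
  "dep m = - (\<Sum>i\<le>l. vv i * int (m i))"
definition Ecf :: "nat \<Rightarrow> nat \<Rightarrow> real" where
  "Ecf N W = fact N / a * (\<Sum>m\<in>Comp (Suc N). (if dep m > int W then real_of_int (dep m) else 0) * Q m)"

lemma a_pos: "a > 0" using k1 mu by (simp add: a_def)

lemma beta_nonneg: "i \<le> l \<Longrightarrow> beta i \<ge> 0"
  using lam a_pos by (auto simp: beta_def intro: less_imp_le)

lemma Q_nonneg: "Q m \<ge> 0"
  unfolding Q_def by (intro prod_nonneg) (auto intro!: divide_nonneg_pos zero_le_power beta_nonneg)

lemma finite_Comp: "finite (Comp n)"
proof -
  have "Comp n \<subseteq> {m::nat\<Rightarrow>nat. (\<forall>i. i \<notin> {..l} \<longrightarrow> m i = 0) \<and> (\<forall>i. m i \<le> n)}"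
  proof safe
    fix m i assume m: "m \<in> Comp n"
    show "m i \<le> n"
    proof (cases "i \<le> l")
      case True then show ?thesis using m member_le_sum[of i "{..l}" m] by (auto simp: Comp_def)
    next
      case False then show ?thesis using m by (auto simp: Comp_def)
    qed
  qed (auto simp: Comp_def)
  then show ?thesis by (rule finite_subset) (rule finite_supp_bounded, simp)
qed

lemma Q_upd:
  assumes "i \<le> l"
  shows "Q (m(i := Suc (m i))) * real (Suc (m i)) = Q m * beta i"
proof -
  have A: "Q m = beta i ^ m i / fact (m i) * (\<Prod>j\<in>{..l}-{i}. beta j ^ m j / fact (m j))"
    unfolding Q_def using assms by (subst prod.remove[of _ i]) auto
  have B: "Q (m(i := Suc (m i))) = beta i ^ Suc (m i) / fact (Suc (m i)) * (\<Prod>j\<in>{..l}-{i}. beta j ^ m j / fact (m j))"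
    unfolding Q_def using assms by (subst prod.remove[of _ i]) (auto intro!: prod.cong)
  have F: "(fact (Suc (m i)) :: real) = real (Suc (m i)) * fact (m i)" by (simp add: fact_Suc)
  have "real (Suc (m i)) > 0" by simp
  then show ?thesis unfolding A B F by (simp add: field_simps del: of_nat_Suc)
qed

lemma Comp_upd_image:
  assumes "i \<le> l"
  shows "(\<lambda>m. m(i := Suc (m i))) ` Comp n = {m\<in>Comp (Suc n). m i \<ge> 1}"
proof (intro equalityI subsetI)
  fix m' assume "m' \<in> (\<lambda>m. m(i := Suc (m i))) ` Comp n"
  then obtain m where m: "m \<in> Comp n" and m': "m' = m(i := Suc (m i))" by auto
  have "sum m' {..l} = Suc (sum m {..l})"
    unfolding m' using assms by (simp add: sum.remove[of "{..l}" i] sum_Suc)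
  with m m' assms show "m' \<in> {m\<in>Comp (Suc n). m i \<ge> 1}" by (auto simp: Comp_def)
next
  fix m' assume m': "m' \<in> {m\<in>Comp (Suc n). m i \<ge> 1}"
  define m where "m = m'(i := m' i - 1)"
  have eq: "m' = m(i := Suc (m i))" using m' by (auto simp: m_def fun_eq_iff)
  have "sum m' {..l} = Suc (sum m {..l})"
    using assms by (subst eq) (simp add: sum.remove[of "{..l}" i])
  then have "m \<in> Comp n" using m' assms by (auto simp: Comp_def m_def)
  with eq show "m' \<in> (\<lambda>m. m(i := Suc (m i))) ` Comp n" by blast
qed

lemma G:
  "(\<Sum>m\<in>Comp n. Q m * (\<Sum>i\<le>l. beta i * c i * g (m(i := Suc (m i)))))
   = (\<Sum>m\<in>Comp (Suc n). Q m * g m * (\<Sum>i\<le>l. c i * real (m i)))"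
proof -
  have "(\<Sum>m\<in>Comp n. Q m * (\<Sum>i\<le>l. beta i * c i * g (m(i := Suc (m i)))))
      = (\<Sum>i\<le>l. \<Sum>m\<in>Comp n. Q m * beta i * c i * g (m(i := Suc (m i))))"
    by (subst sum.swap) (simp add: sum_distrib_left mult.assoc)
  also have "\<dots> = (\<Sum>i\<le>l. \<Sum>m\<in>Comp (Suc n). Q m * g m * (c i * real (m i)))"
  proof (rule sum.cong[OF refl])
    fix i assume i: "i \<in> {..l}"
    let ?u = "\<lambda>m::nat\<Rightarrow>nat. m(i := Suc (m i))"
    have inj: "inj_on ?u (Comp n)"
      by (rule inj_onI) (metis fun_upd_same fun_upd_upd fun_upd_triv nat.inject)
    have "(\<Sum>m\<in>Comp n. Q m * beta i * c i * g (?u m))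
        = (\<Sum>m\<in>Comp n. Q (?u m) * g (?u m) * (c i * real (?u m i)))"
      using i by (intro sum.cong refl) (simp add: Q_upd[symmetric])
    also have "\<dots> = (\<Sum>m'\<in>?u ` Comp n. Q m' * g m' * (c i * real (m' i)))"
      by (subst sum.reindex[OF inj]) simp
    also have "\<dots> = (\<Sum>m'\<in>Comp (Suc n). Q m' * g m' * (c i * real (m' i)))"
      using i by (subst Comp_upd_image) (auto intro!: sum.mono_neutral_left finite_Comp)
    finally show "(\<Sum>m\<in>Comp n. Q m * beta i * c i * g (?u m)) = \<dots>" .
  qed
  also have "\<dots> = (\<Sum>m\<in>Comp (Suc n). Q m * g m * (\<Sum>i\<le>l. c i * real (m i)))"
    by (subst sum.swap) (simp add: sum_distrib_left)
  finally show ?thesis .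
qed

lemma dep_upd: "i \<le> l \<Longrightarrow> dep (m(i := Suc (m i))) = dep m - vv i"
  unfolding dep_def by (simp add: sum.remove[of "{..l}" i] algebra_simps)

lemma sum_Comp: "m \<in> Comp n \<Longrightarrow> (\<Sum>i\<le>l. real (m i)) = real n"
  unfolding Comp_def by (simp flip: of_nat_sum)

lemma sum_vv: "(\<Sum>i\<le>l. real_of_int (vv i) * real (m i)) = - real_of_int (dep m)"
  unfolding dep_def by simp

lemma atMost_split0: "{..l} = insert 0 {1..l}" by auto

lemma Ecf_rec:
  "Ecf (Suc N) W = a * Ecf N (W - 1) + (\<Sum>j=1..l. lam j * Ecf N (W + j * k))"
proof -
  define g1 where "g1 = (\<lambda>m. if dep m > int W then real_of_int (dep m) else 0)"
  define g0 where "g0 = (\<lambda>m. if dep m > int W then (1::real) else 0)"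
  define X where "X = (\<Sum>m\<in>Comp (Suc (Suc N)). g1 m * Q m)"
  define Y where "Y = (\<Sum>m\<in>Comp (Suc N). Q m * (\<Sum>i\<le>l. beta i *
        (if dep m - vv i > int W then real_of_int (dep m) else 0)))"
  have G1: "(\<Sum>m\<in>Comp (Suc N). Q m * (\<Sum>i\<le>l. beta i * 1 * g1 (m(i := Suc (m i)))))
      = real (Suc (Suc N)) * X"
  proof -
    have "(\<Sum>m\<in>Comp (Suc N). Q m * (\<Sum>i\<le>l. beta i * 1 * g1 (m(i := Suc (m i)))))
       = (\<Sum>m\<in>Comp (Suc (Suc N)). Q m * g1 m * (\<Sum>i\<le>l. 1 * real (m i)))" by (rule G)
    also have "\<dots> = (\<Sum>m\<in>Comp (Suc (Suc N)). real (Suc (Suc N)) * (g1 m * Q m))"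
      by (intro sum.cong refl) (simp add: sum_Comp)
    finally show ?thesis by (simp add: X_def sum_distrib_left)
  qed
  have G0: "(\<Sum>m\<in>Comp (Suc N). Q m * (\<Sum>i\<le>l. beta i * real_of_int (vv i) * g0 (m(i := Suc (m i)))))
      = - X"
  proof -
    have "(\<Sum>m\<in>Comp (Suc N). Q m * (\<Sum>i\<le>l. beta i * real_of_int (vv i) * g0 (m(i := Suc (m i)))))
       = (\<Sum>m\<in>Comp (Suc (Suc N)). Q m * g0 m * (\<Sum>i\<le>l. real_of_int (vv i) * real (m i)))" by (rule G)
    also have "\<dots> = (\<Sum>m\<in>Comp (Suc (Suc N)). - (g1 m * Q m))"
      by (intro sum.cong refl) (simp add: sum_vv g0_def g1_def)
    finally show ?thesis by (simp add: X_def sum_negf)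
  qed
  have pt: "beta i * g1 (m(i := Suc (m i))) = beta i * (if dep m - vv i > int W then real_of_int (dep m) else 0)
      - beta i * real_of_int (vv i) * g0 (m(i := Suc (m i)))" if "i \<le> l" for i m
    using that by (simp add: g1_def g0_def dep_upd algebra_simps)
  have "real (Suc (Suc N)) * X = Y + X"
  proof -
    have "real (Suc (Suc N)) * X = (\<Sum>m\<in>Comp (Suc N). Q m * (\<Sum>i\<le>l. beta i * 1 * g1 (m(i := Suc (m i)))))"
      using G1 by simp
    also have "\<dots> = Y - (\<Sum>m\<in>Comp (Suc N). Q m * (\<Sum>i\<le>l. beta i * real_of_int (vv i) * g0 (m(i := Suc (m i)))))"
      unfolding Y_def sum_subtractf[symmetric]
      by (intro sum.cong refl) (simp add: sum_subtractf[symmetric] right_diff_distrib[symmetric] pt)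
    also have "\<dots> = Y + X" using G0 by simp
    finally show ?thesis .
  qed
  then have XY: "real (Suc N) * X = Y" by (simp add: algebra_simps)
  have lhs: "Ecf (Suc N) W = fact N / a * Y"
  proof -
    have "Ecf (Suc N) W = fact (Suc N) / a * X" unfolding Ecf_def X_def g1_def by simp
    also have "\<dots> = fact N / a * (real (Suc N) * X)" by (simp add: fact_Suc del: of_nat_Suc)
    finally show ?thesis using XY by simp
  qed
  have Yeq: "Y = a * (\<Sum>m\<in>Comp (Suc N). (if dep m > int (W - 1) then real_of_int (dep m) else 0) * Q m)
      + (\<Sum>j=1..l. lam j * (\<Sum>m\<in>Comp (Suc N). (if dep m > int (W + j * k) then real_of_int (dep m) else 0) * Q m))"
  proof -
    have e0: "(if dep m - vv 0 > int W then real_of_int (dep m) else 0) = (if dep m > int (W - 1) then real_of_int (dep m) else 0)" for m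
      by (cases W) (auto simp: vv_def)
    have ej: "(if dep m - vv j > int W then real_of_int (dep m) else 0) = (if dep m > int (W + j * k) then real_of_int (dep m) else 0)"
      if "j \<ge> 1" for m j using that by (auto simp: vv_def)
    have "Y = (\<Sum>m\<in>Comp (Suc N). Q m * (a * (if dep m > int (W - 1) then real_of_int (dep m) else 0))
        + (\<Sum>j=1..l. Q m * (lam j * (if dep m > int (W + j * k) then real_of_int (dep m) else 0))))"
      unfolding Y_def atMost_split0
      by (intro sum.cong refl) (simp add: e0 ej beta_def distrib_left sum_distrib_left)
    also have "\<dots> = (\<Sum>m\<in>Comp (Suc N). Q m * (a * (if dep m > int (W - 1) then real_of_int (dep m) else 0)))
        + (\<Sum>j=1..l. \<Sum>m\<in>Comp (Suc N). Q m * (lam j * (if dep m > int (W + j * k) then real_of_int (dep m) else 0)))"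
      by (simp add: sum.distrib sum.swap[of _ "Comp (Suc N)"])
    finally show ?thesis by (simp add: sum_distrib_left mult_ac)
  qed
  show ?thesis unfolding lhs Yeq unfolding Ecf_def
    by (simp add: distrib_left sum_distrib_left mult_ac)
qed

lemma Comp0: "Comp 0 = {\<lambda>_. 0}"
  unfolding Comp_def by (auto simp: fun_eq_iff)

lemma Q0: "Q (\<lambda>_. 0) = 1" unfolding Q_def by simp

lemma dep0: "dep (\<lambda>_. 0) = 0" unfolding dep_def by simp

lemma Ecf_0: "Ecf 0 W = (if W = 0 then 1 else 0)"
proof -
  define g1 where "g1 = (\<lambda>m. if dep m > int W then real_of_int (dep m) else 0)"
  have "(\<Sum>m\<in>Comp 0. Q m * (\<Sum>i\<le>l. beta i * 1 * g1 (m(i := Suc (m i)))))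
       = (\<Sum>m\<in>Comp (Suc 0). Q m * g1 m * (\<Sum>i\<le>l. 1 * real (m i)))" by (rule G)
  also have "\<dots> = (\<Sum>m\<in>Comp (Suc 0). g1 m * Q m)"
    by (intro sum.cong refl) (simp add: sum_Comp)
  finally have eq: "(\<Sum>m\<in>Comp (Suc 0). g1 m * Q m) = (\<Sum>i\<le>l. beta i * g1 ((\<lambda>_. 0)(i := Suc 0)))"
    by (simp add: Comp0 Q0 fun_upd_def)
  have d: "i \<le> l \<Longrightarrow> dep ((\<lambda>_. 0)(i := Suc 0)) = - vv i" for i
    using dep_upd[of i "\<lambda>_. 0"] by (simp add: dep0)
  have "(\<Sum>i\<le>l. beta i * g1 ((\<lambda>_. 0)(i := Suc 0))) = beta 0 * g1 ((\<lambda>_. 0)(0 := Suc 0))"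
    unfolding atMost_split0 using k1
    by (subst sum.insert) (auto simp: g1_def d vv_def simp del: of_nat_mult intro!: sum.neutral)
  also have "\<dots> = (if W = 0 then a else 0)"
    using d[of 0] by (simp add: g1_def vv_def beta_def)
  finally show ?thesis unfolding Ecf_def using eq a_pos by (simp add: g1_def)
qed

definition q :: real where "q = Lam l lam + a"

lemma sum_beta: "(\<Sum>i\<le>l. beta i) = q"
  unfolding q_def Lam_def atMost_split0 by (simp add: beta_def)

lemma Lam_nonneg: "Lam l lam \<ge> 0"
proof -
  have "\<And>x. x \<in> {1..l} \<Longrightarrow> 0 \<le> lam x" using lam by (meson less_imp_le)
  then show ?thesis unfolding Lam_def by (rule sum_nonneg)
qed

lemma q_pos: "q > 0" using Lam_nonneg a_pos by (simp add: q_def)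

lemma sumQ: "(\<Sum>m\<in>Comp n. Q m) = q ^ n / fact n"
proof (induction n)
  case 0 then show ?case by (simp add: Comp0 Q0)
next
  case (Suc n)
  have "(\<Sum>m\<in>Comp n. Q m * (\<Sum>i\<le>l. beta i * 1 * 1))
       = (\<Sum>m\<in>Comp (Suc n). Q m * 1 * (\<Sum>i\<le>l. 1 * real (m i)))" by (rule G)
  also have "\<dots> = real (Suc n) * (\<Sum>m\<in>Comp (Suc n). Q m)"
    by (simp add: sum_Comp sum_distrib_left mult.commute cong: sum.cong)
  finally have "real (Suc n) * (\<Sum>m\<in>Comp (Suc n). Q m) = q * (q ^ n / fact n)"
    using Suc by (simp add: sum_beta sum_distrib_left[symmetric] mult.commute)
  then show ?case by (simp add: fact_Suc field_simps del: of_nat_Suc)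
qed

lemma Ecf_nonneg: "Ecf N W \<ge> 0"
  unfolding Ecf_def using a_pos
  by (intro mult_nonneg_nonneg divide_nonneg_pos sum_nonneg) (auto intro!: Q_nonneg)

lemma dep_le: "m \<in> Comp n \<Longrightarrow> dep m \<le> int n"
proof -
  assume m: "m \<in> Comp n"
  have "dep m = int (m 0) - (\<Sum>i\<in>{1..l}. vv i * int (m i))"
    unfolding dep_def atMost_split0 by (simp add: vv_def)
  also have "\<dots> \<le> int (m 0)" by (auto intro!: sum_nonneg simp: vv_def)
  also have "m 0 \<le> n" using m member_le_sum[of 0 "{..l}" m] by (auto simp: Comp_def)
  finally show ?thesis by simp
qed

lemma Ecf_le: "Ecf N W \<le> q ^ Suc N / a"
proof -
  have "(\<Sum>m\<in>Comp (Suc N). (if dep m > int W then real_of_int (dep m) else 0) * Q m)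
      \<le> (\<Sum>m\<in>Comp (Suc N). real (Suc N) * Q m)"
  proof (intro sum_mono mult_right_mono Q_nonneg)
    fix m assume "m \<in> Comp (Suc N)"
    then have "dep m \<le> int (Suc N)" by (rule dep_le)
    then show "(if dep m > int W then real_of_int (dep m) else 0) \<le> real (Suc N)"
      by (auto simp del: of_nat_Suc)
  qed
  also have "\<dots> = real (Suc N) * (q ^ Suc N / fact (Suc N))" by (simp add: sum_distrib_left[symmetric] sumQ)
  finally have *: "(\<Sum>m\<in>Comp (Suc N). (if dep m > int W then real_of_int (dep m) else 0) * Q m)
      \<le> real (Suc N) * (q ^ Suc N / fact (Suc N))" .
  have "Ecf N W \<le> fact N / a * (real (Suc N) * (q ^ Suc N / fact (Suc N)))"
    unfolding Ecf_def using a_pos by (intro mult_left_mono *) auto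
  also have "\<dots> = q ^ Suc N / a" by (simp add: fact_Suc del: of_nat_Suc)
  finally show ?thesis .
qed

definition phi :: "nat \<Rightarrow> qstate" where
  "phi W = (if W = 0 then (0, 0) else ((W - 1) div k + 1, (W - 1) mod k + 1))"

lemma phi_eq:
  assumes "W - 1 = (s - 1) + k * (n - 1)" "W \<ge> 1" "1 \<le> n" "1 \<le> s" "s \<le> k"
  shows "phi W = (n, s)"
proof -
  have "(s - 1) div k = 0" "(s - 1) mod k = s - 1" using assms by auto
  then have "(W - 1) div k = n - 1" "(W - 1) mod k = s - 1" unfolding assms(1) using k1 by auto
  then show ?thesis unfolding phi_def using assms by simp
qed

lemma phi_repr:
  assumes "1 \<le> n" "1 \<le> s" "s \<le> k"
  shows "phi ((n - 1) * k + s) = (n, s)"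
proof -
  have e: "(n - 1) * k + s - 1 = (s - 1) + k * (n - 1)" using assms by (simp add: Nat.add_diff_assoc mult.commute)
  have "(n - 1) * k + s \<ge> 1" using assms by simp
  then show ?thesis by (rule phi_eq[OF e _ assms])
qed

lemma phi0: "phi 0 = (0, 0)" by (simp add: phi_def)

lemma phi_cases:
  assumes "W \<ge> 1"
  obtains n s where "W = (n - 1) * k + s" "1 \<le> n" "1 \<le> s" "s \<le> k"
proof -
  have "W = ((W - 1) div k + 1 - 1) * k + ((W - 1) mod k + 1)"
    using assms by simp
  moreover have "(W - 1) mod k + 1 \<le> k" using k1
    by (metis Suc_eq_plus1 Suc_leI less_le_trans mod_less_divisor zero_less_one)
  ultimately show ?thesis using that by fastforce
qed

lemma sl: "sum_list (map f [1..<l+1]) = (\<Sum>m=1..l. f m)"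
  unfolding interv_sum_list_conv_sum_set_nat set_upt by (simp add: atLeastLessThanSuc_atLeastAtMost)

lemma kpow_Suc':
  "kpow k l mu lam (Suc N) x y = (1 - sum_list (map snd (jumps k l mu lam x)) / q) * kpow k l mu lam N x y
     + sum_list (map (\<lambda>(z, r). r / q * kpow k l mu lam N z y) (jumps k l mu lam x))"
  by (simp add: q_def a_def Let_def)

lemma kpow_step:
  "q ^ Suc N * kpow k l mu lam (Suc N) (phi W) y
   = a * (q ^ N * kpow k l mu lam N (phi (W - 1)) y)
     + (\<Sum>j=1..l. lam j * (q ^ N * kpow k l mu lam N (phi (W + j * k)) y))"
proof (cases "W = 0")
  case True
  have js: "jumps k l mu lam (phi W) = map (\<lambda>m. ((m, k), lam m)) [1..<l+1]"
    using True by (simp add: phi0 jumps_def)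
  have pk: "m \<in> {1..l} \<Longrightarrow> (m, k) = phi (W + m * k)" for m
    using phi_repr[of m k] k1 True by (auto simp: algebra_simps)
  have "q ^ Suc N * kpow k l mu lam (Suc N) (phi W) y
      = q ^ Suc N * ((1 - Lam l lam / q) * kpow k l mu lam N (phi W) y
         + (\<Sum>m=1..l. lam m / q * kpow k l mu lam N (m, k) y))"
    unfolding kpow_Suc' js map_map map_append o_def sl by (simp add: Lam_def)
  also have "\<dots> = a * (q ^ N * kpow k l mu lam N (phi W) y)
         + (\<Sum>m=1..l. lam m * (q ^ N * kpow k l mu lam N (m, k) y))"
  proof -
    have A: "q ^ Suc N * ((1 - Lam l lam / q) * x) = a * (q ^ N * x)" for x
      using q_pos by (simp add: q_def field_simps)
    have B: "q ^ Suc N * (c / q * x) = c * (q ^ N * x)" for c x using q_pos by (simp add: field_simps)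
    show ?thesis by (simp only: distrib_left sum_distrib_left B A)
  qed
  finally show ?thesis using True pk by simp
next
  case False
  then obtain n s where W: "W = (n - 1) * k + s" and ns: "1 \<le> n" "1 \<le> s" "s \<le> k"
    using phi_cases[of W] by auto
  have ph: "phi W = (n, s)" using W ns phi_repr by simp
  define svc where "svc = (if s \<ge> 2 then (n, s - 1) else if n \<ge> 2 then (n - 1, k) else (0, 0))"
  have svc: "svc = phi (W - 1)"
  proof -
    consider "s \<ge> 2" | "s = 1" "n \<ge> 2" | "s = 1" "n = 1" using ns by linarith
    then show ?thesis
    proof cases
      case 1
      then have "W - 1 = (n - 1) * k + (s - 1)" using W by simp
      moreover have "phi ((n - 1) * k + (s - 1)) = (n, s - 1)" using 1 ns by (intro phi_repr) auto
      ultimately show ?thesis using 1 by (simp add: svc_def)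
    next
      case 2
      define j where "j = n - 2"
      have j: "n = Suc (Suc j)" using 2 by (simp add: j_def)
      have "W - 1 = (Suc j - 1) * k + k" using W 2 j by simp
      moreover have "phi ((Suc j - 1) * k + k) = (Suc j, k)" using k1 by (intro phi_repr) auto
      ultimately show ?thesis using 2 j by (simp add: svc_def)
    next
      case 3
      then show ?thesis using W by (simp add: svc_def phi0)
    qed
  qed
  have js: "jumps k l mu lam (phi W) = map (\<lambda>m. ((n + m, s), lam m)) [1..<l+1] @ [(svc, a)]"
    using ph ns by (simp add: jumps_def svc_def a_def)
  have pk: "m \<in> {1..l} \<Longrightarrow> (n + m, s) = phi (W + m * k)" for m
  proof -
    have e1: "n + m - 1 = (n - 1) + m" using ns by simp
    have "W + m * k = (n + m - 1) * k + s" unfolding e1 W by (simp add: add_mult_distrib)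
    then show "(n + m, s) = phi (W + m * k)" using phi_repr[of "n + m" s] ns by simp
  qed
  have "q ^ Suc N * kpow k l mu lam (Suc N) (phi W) y
      = q ^ Suc N * ((1 - (Lam l lam + a) / q) * kpow k l mu lam N (phi W) y
         + ((\<Sum>m=1..l. lam m / q * kpow k l mu lam N (n + m, s) y) + a / q * kpow k l mu lam N svc y))"
    unfolding kpow_Suc' js map_map map_append sum_list_append o_def sl by (simp add: Lam_def)
  also have "\<dots> = a * (q ^ N * kpow k l mu lam N svc y)
         + (\<Sum>m=1..l. lam m * (q ^ N * kpow k l mu lam N (n + m, s) y))"
  proof -
    have A: "1 - (Lam l lam + a) / q = 0" using q_pos by (simp add: q_def)
    have B: "q ^ Suc N * (c / q * x) = c * (q ^ N * x)" for c x using q_pos by (simp add: field_simps)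
    show ?thesis by (simp only: A distrib_left sum_distrib_left B mult_zero_left mult_zero_right add_0_left)
  qed
  finally show ?thesis using svc pk by simp
qed

lemma kpow_Ecf: "q ^ N * kpow k l mu lam N (phi W) (0, 0) = Ecf N W"
proof (induction N arbitrary: W)
  case 0
  have "phi W = (0, 0) \<longleftrightarrow> W = 0" by (simp add: phi_def)
  then show ?case by (simp add: Ecf_0)
next
  case (Suc N)
  show ?case by (simp only: kpow_step Suc.IH Ecf_rec)
qed

lemma kpow00: "q ^ N * kpow k l mu lam N (0, 0) (0, 0) = Ecf N 0"
  using kpow_Ecf[of N 0] by (simp add: phi0)

end


locale EQ2 = EQ +
  fixes p :: real and r :: nat
  assumes p_pos: "p > 0" and l1: "l \<ge> 1"
begin

definition xx :: real where "xx = 1 / (q + p)"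
definition tm :: "nat \<Rightarrow> real" where "tm N = Ecf N 0 * fact r * xx ^ (N + r + 2)"
definition Sm :: "(nat \<Rightarrow> nat) \<Rightarrow> nat" where "Sm m = (\<Sum>j=1..l. j * m j)"
definition Phi :: "nat \<Rightarrow> (nat \<Rightarrow> nat) \<Rightarrow> (nat \<Rightarrow> nat)" where "Phi h m = m(0 := Suc h + k * Sm m)"
definition F :: "(nat \<Rightarrow> nat) \<Rightarrow> real" where
  "F m = (if dep m > 0 then fact (sum m {..l} - 1) / a * real_of_int (dep m) * Q m * fact r
            * xx ^ (sum m {..l} + r + 1) else 0)"

lemma xx_pos: "xx > 0" using q_pos p_pos by (simp add: xx_def)
lemma qxx: "q * xx < 1" using q_pos p_pos by (simp add: xx_def)

lemma tm_nonneg: "tm N \<ge> 0" unfolding tm_def using Ecf_nonneg xx_pos by simp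

lemma summable_tm: "summable tm"
proof (rule summable_comparison_test)
  let ?g = "\<lambda>N. (q / a * fact r * xx ^ (r + 2)) * (q * xx) ^ N"
  show "summable ?g" using qxx q_pos xx_pos by (intro summable_mult summable_geometric) simp
  show "\<exists>N0. \<forall>N\<ge>N0. norm (tm N) \<le> ?g N"
  proof (intro exI allI impI)
    fix N :: nat
    have "tm N \<le> q ^ Suc N / a * fact r * xx ^ (N + r + 2)"
      unfolding tm_def using xx_pos by (intro mult_right_mono Ecf_le) auto
    also have "\<dots> = ?g N" by (simp add: power_mult_distrib power_add field_simps)
    finally show "norm (tm N) \<le> ?g N" using tm_nonneg by simp
  qed
qed

lemma sum_split: "sum m {..l} = m 0 + (\<Sum>i=1..l. m i)"
  unfolding atMost_split0 by simp

lemma dep_split: "dep m = int (m 0) - int (k * Sm m)"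
  unfolding dep_def Sm_def atMost_split0
  by (simp add: vv_def sum_distrib_left of_nat_mult mult_ac)

lemma Q_split: "Q m = a ^ m 0 / fact (m 0) * (\<Prod>i=1..l. lam i ^ m i / fact (m i))"
  unfolding Q_def atMost_split0 by (simp add: beta_def)

lemma F_nonneg: "F m \<ge> 0"
  unfolding F_def using a_pos xx_pos Q_nonneg by simp

lemma block: "(\<Sum>m\<in>Comp (Suc N). F m) = tm N"
proof -
  have "(\<Sum>m\<in>Comp (Suc N). F m)
      = (\<Sum>m\<in>Comp (Suc N). (if dep m > int 0 then real_of_int (dep m) else 0) * Q m * (fact N / a * fact r * xx ^ (N + r + 2)))"
  proof (intro sum.cong refl)
    fix m assume "m \<in> Comp (Suc N)"
    then have "sum m {..l} = Suc N" by (simp add: Comp_def)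
    then show "F m = (if dep m > int 0 then real_of_int (dep m) else 0) * Q m * (fact N / a * fact r * xx ^ (N + r + 2))"
      by (simp add: F_def)
  qed
  also have "\<dots> = tm N"
    unfolding tm_def Ecf_def by (simp add: sum_distrib_right sum_distrib_left sum_divide_distrib mult_ac)
  finally show ?thesis .
qed

lemma hasF: "((\<lambda>(N, m). F m) has_sum suminf tm) (Sigma UNIV (\<lambda>N. Comp (Suc N)))"
proof -
  have fib: "((\<lambda>m. (\<lambda>(N, m). F m) (N, m)) has_sum tm N) (Comp (Suc N))" for N
    using block[of N] finite_Comp by (simp add: has_sum_finiteI)
  have g: "(tm has_sum suminf tm) UNIV"
    using summable_tm tm_nonneg by (intro sums_nonneg_imp_has_sum summable_sums)
  show ?thesis
  proof (rule has_sum_SigmaI[OF _ g])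
    show "((\<lambda>y. (\<lambda>(N, m). F m) (N, y)) has_sum tm N) (Comp (Suc N))" if "N \<in> UNIV" for N using fib .
    show "(\<lambda>(N, m). F m) summable_on Sigma UNIV (\<lambda>N. Comp (Suc N))"
      by (rule summable_on_SigmaI[where g = tm]) (use fib g F_nonneg in \<open>auto simp: has_sum_imp_summable\<close>)
  qed
qed

definition ft :: "(nat \<times> nat) \<times> (nat \<Rightarrow> nat) \<Rightarrow> real" where
  "ft = (\<lambda>((h, w), m). C0 k l mu lam (Suc h) w m * Gamma (real r + 1)
            / (Lam l lam + real k * mu + p) ^ (gamma0 k l (Suc h) w m + r + 1))"

lemma Lam_pos: "Lam l lam > 0"
proof -
  have "lam 1 > 0" using lam l1 by auto
  moreover have "lam 1 \<le> Lam l lam" unfolding Lam_def using l1 lam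
    by (intro member_le_sum) (auto intro: less_imp_le)
  ultimately show ?thesis by simp
qed

lemma comps_0: "m \<in> comps l w \<Longrightarrow> m 0 = 0" by (simp add: comps_def)

lemma Sm_upd0: "Sm (m(0 := c)) = Sm m" unfolding Sm_def by (intro sum.cong) auto

lemma sum_upd0: "(\<Sum>i=1..l. (m(0 := c)) i) = (\<Sum>i=1..l. m i)" by (intro sum.cong) auto

lemma prod_upd0: "(\<Prod>i=1..l. f i ((m(0 := c)) i)) = (\<Prod>i=1..l. f i (m i))" by (intro prod.cong) auto

lemma term_eq:
  assumes m: "m \<in> comps l w"
  shows "F (Phi h m) = ft ((h, w), m)"
proof -
  define S where "S = Sm m"
  define D where "D = Suc h + k * S"
  define P where "P = (\<Prod>i=1..l. lam i ^ m i / fact (m i))"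
  have m0: "m 0 = 0" using m by (rule comps_0)
  have sw: "(\<Sum>i=1..l. m i) = w" using m by (simp add: comps_def)
  have g: "gamma0 k l (Suc h) w m = D + w" by (simp add: gamma0_def D_def S_def Sm_def)
  have sumPhi: "sum (Phi h m) {..l} = D + w"
    unfolding sum_split Phi_def sum_upd0 sw by (simp add: D_def S_def)
  have depPhi: "dep (Phi h m) = int (Suc h)"
    unfolding dep_split Phi_def Sm_upd0 by (simp add: S_def)
  have QPhi: "Q (Phi h m) = a ^ D / fact D * P"
    unfolding Q_split Phi_def prod_upd0 by (simp add: D_def S_def P_def)
  have hP: "Lam l lam ^ w * (\<Prod>i=1..l. (lam i / Lam l lam) ^ m i / fact (m i)) = P"
  proof -
    have "(\<Prod>i=1..l. (lam i / Lam l lam) ^ m i / fact (m i))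
        = (\<Prod>i=1..l. (lam i ^ m i / fact (m i)) / Lam l lam ^ m i)"
      by (intro prod.cong) (auto simp: power_divide)
    also have "\<dots> = P / (\<Prod>i=1..l. Lam l lam ^ m i)" unfolding P_def by (rule prod_dividef)
    also have "(\<Prod>i=1..l. Lam l lam ^ m i) = Lam l lam ^ w" using sw by (simp add: power_sum[symmetric])
    finally show ?thesis using Lam_pos by simp
  qed
  have D1: "D \<ge> 1" by (simp add: D_def)
  have aD: "a ^ (D - 1) = a ^ D / a" using a_pos D1
    by (metis One_nat_def Suc_pred less_le_trans nonzero_mult_div_cancel_left not_one_le_zero not_le power_Suc zero_less_one less_irrefl)
  have aD': "(real k * mu) ^ (D - 1) = a ^ D / a" using aD by (simp add: a_def)
  have G: "Gamma (real r + 1) = fact r" using Gamma_fact[of r] by (simp add: add.commute)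
  have qp: "Lam l lam + real k * mu + p = 1 / xx" by (simp add: xx_def q_def a_def)
  have C0e: "C0 k l mu lam (Suc h) w m = real (Suc h) * P * (a ^ D / a) / fact D * fact (D + w - 1)"
    unfolding C0_def Let_def g using hP aD' by (simp add: mult_ac)
  have fte: "ft ((h, w), m) = C0 k l mu lam (Suc h) w m * Gamma (real r + 1)
            / (Lam l lam + real k * mu + p) ^ (gamma0 k l (Suc h) w m + r + 1)" by (simp add: ft_def)
  show ?thesis
    unfolding F_def fte sumPhi depPhi QPhi C0e G qp g using xx_pos a_pos
    by (simp add: field_simps power_one_over)
qed

lemma has_ft: "(ft has_sum suminf tm) (Sigma UNIV (\<lambda>(h, w). comps l w))"
proof -
  let ?U = "Sigma UNIV (\<lambda>N. {m\<in>Comp (Suc N). dep m > 0})"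
  have hU: "((\<lambda>(N, m). F m) has_sum suminf tm) ?U"
    using hasF by (rule has_sum_cong_neutral[THEN iffD1, rotated -1]) (auto simp: F_def split: if_splits)
  show ?thesis
  proof (rule has_sum_reindex_bij_witness[THEN iffD2, OF _ _ _ _ _ refl hU])
    show "(\<lambda>x. ((nat (dep (snd x)) - 1, Suc (fst x) - snd x 0), (snd x)(0 := 0)))
            ((\<lambda>((h, w), m). (h + w + k * Sm m, Phi h m)) a) = a"
      if "a \<in> Sigma UNIV (\<lambda>(h, w). comps l w)" for a
      using that by (auto simp: dep_split Phi_def Sm_upd0 comps_0 fun_eq_iff)
    show "(\<lambda>((h, w), m). (h + w + k * Sm m, Phi h m)) a \<in> ?U"
      if A: "a \<in> Sigma UNIV (\<lambda>(h, w). comps l w)" for a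
    proof -
      obtain h w m where a: "a = ((h, w), m)" and m: "m \<in> comps l w" using A by auto
      have sw: "(\<Sum>i=1..l. m i) = w" using m by (simp add: comps_def)
      have sumPhi: "sum (Phi h m) {..l} = Suc (h + w + k * Sm m)"
        unfolding sum_split Phi_def sum_upd0 sw by simp
      have depPhi: "dep (Phi h m) = int (Suc h)"
        unfolding dep_split Phi_def Sm_upd0 by simp
      have supp: "\<forall>i. i \<notin> {..l} \<longrightarrow> Phi h m i = 0" using m by (auto simp: Phi_def comps_def)
      show ?thesis unfolding a using sumPhi depPhi supp by (simp add: Comp_def)
    qed
    show "(\<lambda>((h, w), m). (h + w + k * Sm m, Phi h m))
            ((\<lambda>x. ((nat (dep (snd x)) - 1, Suc (fst x) - snd x 0), (snd x)(0 := 0))) b) = b"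
      if B: "b \<in> ?U" for b
    proof -
      obtain N m where b: "b = (N, m)" and m: "m \<in> Comp (Suc N)" and d: "dep m > 0" using B by auto
      have s: "m 0 + (\<Sum>i=1..l. m i) = Suc N" using m sum_split[of m] by (simp add: Comp_def)
      have d': "k * Sm m < m 0" using d by (simp add: dep_split flip: of_nat_mult)
      have "dep m = int (m 0 - k * Sm m)" using d' unfolding dep_split by (simp add: of_nat_diff less_imp_le)
      then have dn: "nat (dep m) = m 0 - k * Sm m" by simp
      have hN: "nat (dep m) - 1 + (Suc N - m 0) + k * Sm m = N" unfolding dn using d' s by linarith
      have ph: "Phi (nat (dep m) - 1) (m(0 := 0)) = m"
        using d' unfolding dn by (auto simp: Phi_def Sm_upd0 fun_eq_iff)
      show ?thesis unfolding b using hN ph by (simp add: Sm_upd0)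
    qed
    show "(\<lambda>x. ((nat (dep (snd x)) - 1, Suc (fst x) - snd x 0), (snd x)(0 := 0))) b
            \<in> Sigma UNIV (\<lambda>(h, w). comps l w)" if B: "b \<in> ?U" for b
    proof -
      obtain N m where b: "b = (N, m)" and m: "m \<in> Comp (Suc N)" using B by auto
      have s: "m 0 + (\<Sum>i=1..l. m i) = Suc N" using m sum_split[of m] by (simp add: Comp_def)
      have "m(0 := 0) \<in> comps l (Suc N - m 0)"
        using m s unfolding comps_def Comp_def by (auto simp: sum_upd0)
      then show ?thesis unfolding b by simp
    qed
    show "(\<lambda>(N, m). F m) ((\<lambda>((h, w), m). (h + w + k * Sm m, Phi h m)) a) = ft a"
      if "a \<in> Sigma UNIV (\<lambda>(h, w). comps l w)" for a
      using that term_eq by auto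
  qed
qed

lemma finite_comps: "finite (comps l w)"
proof -
  have "comps l w \<subseteq> {m::nat\<Rightarrow>nat. (\<forall>i. i \<notin> {1..l} \<longrightarrow> m i = 0) \<and> (\<forall>i. m i \<le> w)}"
  proof safe
    fix m i assume m: "m \<in> comps l w"
    show "m i \<le> w"
    proof (cases "i \<in> {1..l}")
      case True then show ?thesis using m member_le_sum[of i "{1..l}" m] by (auto simp: comps_def)
    next
      case False then show ?thesis using m by (auto simp: comps_def)
    qed
  qed (auto simp: comps_def)
  then show ?thesis by (rule finite_subset) (rule finite_supp_bounded, simp)
qed

lemma has_sum_nat_suminf:
  fixes f :: "nat \<Rightarrow> real"
  assumes "f summable_on UNIV"
  shows "(f has_sum suminf f) UNIV"
proof -
  have "(f has_sum infsum f UNIV) UNIV" using assms by (rule has_sum_infsum)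
  moreover then have "suminf f = infsum f UNIV" using has_sum_imp_sums sums_unique by metis
  ultimately show ?thesis by simp
qed

lemma rhs_series: "(\<Sum>h. \<Sum>w. \<Sum>m\<in>comps l w. ft ((h, w), m)) = suminf tm"
proof -
  define b where "b = (\<lambda>h w. \<Sum>m\<in>comps l w. ft ((h, w), m))"
  have S1: "((\<lambda>(h, w). b h w) has_sum suminf tm) (Sigma UNIV (\<lambda>_. UNIV))"
  proof -
    have "((\<lambda>x. case x of (h, w) \<Rightarrow> b h w) has_sum suminf tm) UNIV"
    proof (rule has_sum_SigmaD[OF has_ft])
      fix x :: "nat \<times> nat" assume "x \<in> UNIV"
      obtain h w where x: "x = (h, w)" by (cases x)
      show "((\<lambda>y. ft (x, y)) has_sum (case x of (h, w) \<Rightarrow> b h w)) (case x of (h, w) \<Rightarrow> comps l w)"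
        unfolding x b_def using finite_comps by (simp add: has_sum_finiteI)
    qed
    then show ?thesis by simp
  qed
  have fib: "(b h has_sum suminf (b h)) UNIV" for h
    using summable_on_SigmaD1[OF has_sum_imp_summable[OF S1], of h] by (intro has_sum_nat_suminf) simp
  have "((\<lambda>h. suminf (b h)) has_sum suminf tm) UNIV"
    by (rule has_sum_SigmaD[OF S1]) (use fib in simp)
  then have "(\<lambda>h. suminf (b h)) sums suminf tm" by (rule has_sum_imp_sums)
  then show ?thesis unfolding b_def by (rule sums_unique[symmetric])
qed

end


lemma nn_pow_exp:
  fixes b :: real assumes b: "b > 0"
  shows "(\<integral>\<^sup>+x. ennreal (indicator {0..} x * x ^ n * exp (- b * x)) \<partial>lborel) = ennreal (fact n / b ^ Suc n)"
proof -
  have "(\<integral>\<^sup>+x. ennreal (indicator {0..} x * x ^ n * exp (- b * x)) \<partial>lborel)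
      = ennreal \<bar>1 / b\<bar> * (\<integral>\<^sup>+y. ennreal (indicator {0..} (0 + 1 / b * y) * (0 + 1 / b * y) ^ n
            * exp (- b * (0 + 1 / b * y))) \<partial>lborel)"
    using b by (intro nn_integral_real_affine) auto
  also have "(\<integral>\<^sup>+y. ennreal (indicator {0..} (0 + 1 / b * y) * (0 + 1 / b * y) ^ n
            * exp (- b * (0 + 1 / b * y))) \<partial>lborel)
      = (\<integral>\<^sup>+y. ennreal (1 / b ^ n) * (ennreal (y ^ n * exp (- y)) * indicator {0..} y) \<partial>lborel)"
  proof (intro nn_integral_cong)
    fix y :: real
    show "ennreal (indicator {0..} (0 + 1 / b * y) * (0 + 1 / b * y) ^ n * exp (- b * (0 + 1 / b * y)))
        = ennreal (1 / b ^ n) * (ennreal (y ^ n * exp (- y)) * indicator {0..} y)"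
      using b by (auto simp: split: split_indicator simp: ennreal_mult'[symmetric] power_divide zero_le_mult_iff zero_le_divide_iff)
  qed
  also have "\<dots> = ennreal (1 / b ^ n) * ennreal (fact n)"
    by (subst nn_integral_cmult) (auto simp: nn_intergal_power_times_exp_Ici)
  finally show ?thesis using b
    by (simp add: ennreal_mult'[symmetric] ennreal_of_nat_eq_real_of_nat ennreal_mult[symmetric] field_simps)
qed

lemma ind_meas[measurable]:
  "(\<lambda>(s::real, t::real). indicator {0..s} t :: real) \<in> borel_measurable (lborel \<Otimes>\<^sub>M lborel)"
proof -
  have "(\<lambda>(s::real, t::real). indicator {0..s} t :: real) = (\<lambda>x. if 0 \<le> snd x \<and> snd x \<le> fst x then 1 else 0)"
    by (auto simp: fun_eq_iff split: split_indicator)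
  moreover have "(\<lambda>x::real\<times>real. if 0 \<le> snd x \<and> snd x \<le> fst x then 1 else (0::real)) \<in> borel_measurable (lborel \<Otimes>\<^sub>M lborel)"
    by measurable
  ultimately show ?thesis by simp
qed

lemma J:
  fixes b :: real assumes b: "b > 0"
  shows "(\<integral>\<^sup>+s. (\<integral>\<^sup>+t. ennreal (indicator {0..} s * indicator {0..s} t * t ^ N * (s - t) ^ r * exp (- b * s)) \<partial>lborel) \<partial>lborel)
    = ennreal (fact N * fact r / b ^ (N + r + 2))"
proof -
  have meas: "(\<lambda>(t, s). ennreal (indicator {0..} s * indicator {0..s} t * t ^ N * (s - t) ^ r * exp (- b * s)))
      \<in> borel_measurable (lborel \<Otimes>\<^sub>M lborel)"
  proof -
    have "(\<lambda>(s::real, t::real). ennreal (indicator {0..} s * indicator {0..s} t * t ^ N * (s - t) ^ r * exp (- b * s)))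
      \<in> borel_measurable (lborel \<Otimes>\<^sub>M lborel)" by measurable
    then have "(\<lambda>(s::real, t::real). ennreal (indicator {0..} s * indicator {0..s} t * t ^ N * (s - t) ^ r * exp (- b * s))) \<circ> (\<lambda>(x, y). (y, x))
      \<in> borel_measurable (lborel \<Otimes>\<^sub>M lborel)"
      by (intro measurable_comp[OF measurable_pair_swap']) 
    then show ?thesis by (simp add: o_def case_prod_beta')
  qed
  have "(\<integral>\<^sup>+s. (\<integral>\<^sup>+t. ennreal (indicator {0..} s * indicator {0..s} t * t ^ N * (s - t) ^ r * exp (- b * s)) \<partial>lborel) \<partial>lborel)
      = (\<integral>\<^sup>+t. (\<integral>\<^sup>+s. ennreal (indicator {0..} s * indicator {0..s} t * t ^ N * (s - t) ^ r * exp (- b * s)) \<partial>lborel) \<partial>lborel)"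
    using meas by (rule lborel_pair.Fubini'[where f = "\<lambda>t s. ennreal (indicator {0..} s * indicator {0..s} t * t ^ N * (s - t) ^ r * exp (- b * s))"])
  also have "\<dots> = (\<integral>\<^sup>+t. ennreal (fact r / b ^ Suc r) * ennreal (indicator {0..} t * t ^ N * exp (- b * t)) \<partial>lborel)"
  proof (intro nn_integral_cong)
    fix t :: real
    show "(\<integral>\<^sup>+s. ennreal (indicator {0..} s * indicator {0..s} t * t ^ N * (s - t) ^ r * exp (- b * s)) \<partial>lborel)
        = ennreal (fact r / b ^ Suc r) * ennreal (indicator {0..} t * t ^ N * exp (- b * t))"
    proof (cases "t \<ge> 0")
      case False
      then show ?thesis by (simp add: indicator_def)
    next
      case True
      have "(\<integral>\<^sup>+s. ennreal (indicator {0..} s * indicator {0..s} t * t ^ N * (s - t) ^ r * exp (- b * s)) \<partial>lborel)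
          = ennreal \<bar>1\<bar> * (\<integral>\<^sup>+u. ennreal (indicator {0..} (t + 1 * u) * indicator {0..t + 1 * u} t * t ^ N * (t + 1 * u - t) ^ r * exp (- b * (t + 1 * u))) \<partial>lborel)"
        by (rule nn_integral_real_affine) auto
      also have "\<dots> = (\<integral>\<^sup>+u. ennreal (indicator {0..} (t + 1 * u) * indicator {0..t + 1 * u} t * t ^ N * (t + 1 * u - t) ^ r * exp (- b * (t + 1 * u))) \<partial>lborel)"
        by (simp only: abs_one ennreal_1 mult_1)
      also have "\<dots> = (\<integral>\<^sup>+u. ennreal (t ^ N * exp (- b * t)) * ennreal (indicator {0..} u * u ^ r * exp (- b * u)) \<partial>lborel)"
        using True by (intro nn_integral_cong) (auto simp: split: split_indicator simp: ennreal_mult'[symmetric] exp_add[symmetric] algebra_simps)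
      also have "\<dots> = ennreal (t ^ N * exp (- b * t)) * ennreal (fact r / b ^ Suc r)"
        by (subst nn_integral_cmult) (use nn_pow_exp[OF b, of r] in auto)
      finally show ?thesis using True by (simp add: mult.commute)
    qed
  qed
  also have "\<dots> = ennreal (fact r / b ^ Suc r) * ennreal (fact N / b ^ Suc N)"
    by (subst nn_integral_cmult) (use nn_pow_exp[OF b, of N] in auto)
  also have "\<dots> = ennreal (fact N * fact r / b ^ (N + r + 2))"
    using b by (simp add: ennreal_mult'[symmetric] ennreal_mult[symmetric] power_add field_simps)
  finally show ?thesis .
qed

lemma p0_meas[measurable]: "p0 k l mu lam \<in> borel_measurable borel"
  unfolding p0_def Let_def by measurable

context EQ2
begin

definition kap :: "nat \<Rightarrow> real" where "kap N = kpow k l mu lam N (0, 0) (0, 0)"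
definition pt :: "nat \<Rightarrow> real \<Rightarrow> real" where "pt N t = exp (- q * t) * (q * t) ^ N / fact N * kap N"
definition Gf :: "real \<Rightarrow> real \<Rightarrow> real" where
  "Gf s t = p0 k l mu lam t * (s - t) ^ r * exp (- (Lam l lam + real k * mu) * (s - t)) * exp (- s * p)"

lemma p0_eq: "p0 k l mu lam t = (\<Sum>N. pt N t)"
  unfolding p0_def q_def a_def pt_def kap_def Let_def by (rule refl)

lemma kap_eq: "kap N = Ecf N 0 / q ^ N"
  using kpow00[of N] q_pos by (simp add: kap_def nonzero_eq_divide_eq mult.commute)

lemma kap_nonneg: "kap N \<ge> 0"
  unfolding kap_eq using q_pos Ecf_nonneg by simp

lemma kap_le: "kap N \<le> q / a"
proof -
  have "Ecf N 0 / q ^ N \<le> (q ^ Suc N / a) / q ^ N" using q_pos Ecf_le[of N 0] by (intro divide_right_mono) auto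
  also have "\<dots> = q / a" using q_pos by simp
  finally show ?thesis unfolding kap_eq .
qed

lemma pt_nonneg: "t \<ge> 0 \<Longrightarrow> pt N t \<ge> 0"
  unfolding pt_def using q_pos kap_nonneg by simp

lemma summable_pt: "t \<ge> 0 \<Longrightarrow> summable (\<lambda>N. pt N t)"
proof (rule summable_comparison_test)
  assume t: "t \<ge> 0"
  let ?g = "\<lambda>N. (exp (- q * t) * (q / a)) * (inverse (fact N) * (q * t) ^ N)"
  show "summable ?g" by (intro summable_mult summable_exp)
  show "\<exists>N0. \<forall>N\<ge>N0. norm (pt N t) \<le> ?g N"
  proof (intro exI allI impI)
    fix N :: nat
    have "pt N t \<le> exp (- q * t) * (q * t) ^ N / fact N * (q / a)"
      unfolding pt_def using q_pos t by (intro mult_left_mono kap_le) auto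
    then show "norm (pt N t) \<le> ?g N" using pt_nonneg[OF t] by (simp add: field_simps)
  qed
qed

lemma p0_nonneg: "t \<ge> 0 \<Longrightarrow> p0 k l mu lam t \<ge> 0"
  unfolding p0_eq by (intro suminf_nonneg summable_pt pt_nonneg)

lemma Gf_nonneg: "0 \<le> t \<Longrightarrow> t \<le> s \<Longrightarrow> Gf s t \<ge> 0"
  unfolding Gf_def by (intro mult_nonneg_nonneg p0_nonneg) auto

lemma Gf_meas[measurable]: "(\<lambda>(s, t). Gf s t) \<in> borel_measurable (lborel \<Otimes>\<^sub>M lborel)"
  unfolding Gf_def by measurable

definition hN :: "nat \<Rightarrow> real \<Rightarrow> real \<Rightarrow> ennreal" where
  "hN N s t = ennreal (kap N * q ^ N / fact N)
     * ennreal (indicator {0..} s * indicator {0..s} t * t ^ N * (s - t) ^ r * exp (- (q + p) * s))"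

lemma pointwise: "ennreal (indicator {0..} s * indicator {0..s} t * Gf s t) = (\<Sum>N. hN N s t)"
proof (cases "0 \<le> t \<and> t \<le> s")
  case False
  then have "indicator {0..s} t = (0::real)" by (auto simp: indicator_def)
  then show ?thesis by (simp add: hN_def)
next
  case True
  define R where "R = (s - t) ^ r * exp (- q * (s - t)) * exp (- s * p)"
  have R: "R \<ge> 0" using True by (simp add: R_def)
  have G0: "Gf s t = p0 k l mu lam t * R" unfolding Gf_def R_def q_def a_def by (simp add: mult_ac)
  have G: "Gf s t = (\<Sum>N. pt N t * R)"
    unfolding G0 p0_eq using summable_pt True by (simp add: suminf_mult2)
  have "ennreal (indicator {0..} s * indicator {0..s} t * Gf s t) = ennreal (\<Sum>N. pt N t * R)"
    using True G by simp
  also have "\<dots> = (\<Sum>N. ennreal (pt N t * R))"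
    using True R by (intro suminf_ennreal2[symmetric] summable_mult2 summable_pt mult_nonneg_nonneg pt_nonneg) auto
  also have "\<dots> = (\<Sum>N. hN N s t)"
  proof (intro suminf_cong)
    fix N
    have e: "exp (- q * t) * exp (- q * (s - t)) * exp (- s * p) = exp (- (q + p) * s)"
      by (simp add: exp_add[symmetric] algebra_simps)
    have "pt N t * R = (kap N * q ^ N / fact N) * (t ^ N * (s - t) ^ r * exp (- (q + p) * s))"
      unfolding pt_def R_def e[symmetric] by (simp add: power_mult_distrib field_simps)
    then show "ennreal (pt N t * R) = hN N s t"
      unfolding hN_def using True q_pos kap_nonneg
      by (simp add: ennreal_mult'[symmetric] ennreal_mult[symmetric] indicator_def)
  qed
  finally show ?thesis .
qed

lemma hN_int: "(\<integral>\<^sup>+s. (\<integral>\<^sup>+t. hN N s t \<partial>lborel) \<partial>lborel) = ennreal (tm N)"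
proof -
  have b: "q + p > 0" using q_pos p_pos by simp
  have "(\<integral>\<^sup>+s. (\<integral>\<^sup>+t. hN N s t \<partial>lborel) \<partial>lborel)
      = ennreal (kap N * q ^ N / fact N) * (\<integral>\<^sup>+s. (\<integral>\<^sup>+t. ennreal (indicator {0..} s * indicator {0..s} t * t ^ N * (s - t) ^ r * exp (- (q + p) * s)) \<partial>lborel) \<partial>lborel)"
    unfolding hN_def by (subst nn_integral_cmult[symmetric]) (auto intro!: nn_integral_cong nn_integral_cmult)
  also have "\<dots> = ennreal (kap N * q ^ N / fact N) * ennreal (fact N * fact r / (q + p) ^ (N + r + 2))"
    by (subst J[OF b]) simp
  also have "\<dots> = ennreal (tm N)"
  proof -
    have "kap N * q ^ N / fact N * (fact N * fact r / (q + p) ^ (N + r + 2)) = tm N"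
      unfolding tm_def kpow00[symmetric] kap_def xx_def by (simp add: power_one_over field_simps)
    then show ?thesis using kap_nonneg q_pos b by (simp add: ennreal_mult[symmetric])
  qed
  finally show ?thesis .
qed

lemma double_nn:
  "(\<integral>\<^sup>+s. (\<integral>\<^sup>+t. ennreal (indicator {0..} s * indicator {0..s} t * Gf s t) \<partial>lborel) \<partial>lborel) = ennreal (suminf tm)"
proof -
  have hm[measurable]: "(\<lambda>(s, t). hN N s t) \<in> borel_measurable (lborel \<Otimes>\<^sub>M lborel)" for N
    unfolding hN_def by measurable
  have "(\<integral>\<^sup>+s. (\<integral>\<^sup>+t. ennreal (indicator {0..} s * indicator {0..s} t * Gf s t) \<partial>lborel) \<partial>lborel)
      = (\<integral>\<^sup>+s. (\<integral>\<^sup>+t. (\<Sum>N. hN N s t) \<partial>lborel) \<partial>lborel)"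
    by (simp add: pointwise)
  also have "\<dots> = (\<integral>\<^sup>+s. (\<Sum>N. (\<integral>\<^sup>+t. hN N s t \<partial>lborel)) \<partial>lborel)"
    by (intro nn_integral_cong nn_integral_suminf) measurable
  also have "\<dots> = (\<Sum>N. (\<integral>\<^sup>+s. (\<integral>\<^sup>+t. hN N s t \<partial>lborel) \<partial>lborel))"
    by (intro nn_integral_suminf) measurable
  also have "\<dots> = (\<Sum>N. ennreal (tm N))" by (simp add: hN_int)
  also have "\<dots> = ennreal (suminf tm)" using summable_tm tm_nonneg by (intro suminf_ennreal2)
  finally show ?thesis .
qed

lemma lhs_value: "(LINT s:{0..}|lborel. (LINT t:{0..s}|lborel. Gf s t)) = suminf tm"
proof -
  define Inn where "Inn s = (LINT t:{0..s}|lborel. Gf s t)" for s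
  define I where "I s = (\<integral>\<^sup>+t. ennreal (indicator {0..} s * indicator {0..s} t * Gf s t) \<partial>lborel)" for s
  have Im[measurable]: "I \<in> borel_measurable lborel" unfolding I_def by measurable
  have fin: "AE s in lborel. I s \<noteq> \<infinity>"
    by (rule nn_integral_PInf_AE) (use double_nn in \<open>auto simp: I_def\<close>)
  have Innm[measurable]: "Inn \<in> borel_measurable lborel"
    unfolding Inn_def set_lebesgue_integral_def by measurable
  have Inn_nonneg: "Inn s \<ge> 0" if "s \<ge> 0" for s
    unfolding Inn_def set_lebesgue_integral_def
    by (intro integral_nonneg_AE AE_I2) (auto simp: indicator_def intro!: Gf_nonneg)
  have key: "AE s in lborel. ennreal (indicator {0..} s * Inn s) = I s"
    using fin
  proof (rule eventually_mono)
    fix s assume Is: "I s \<noteq> \<infinity>"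
    show "ennreal (indicator {0..} s * Inn s) = I s"
    proof (cases "0 \<le> s")
      case False
      then show ?thesis by (simp add: I_def indicator_def)
    next
      case True
      have I1: "I s = (\<integral>\<^sup>+t. ennreal (indicator {0..s} t *\<^sub>R Gf s t) \<partial>lborel)"
        unfolding I_def using True by (simp add: indicator_def)
      have "Inn s = enn2real (\<integral>\<^sup>+t. ennreal (indicator {0..s} t *\<^sub>R Gf s t) \<partial>lborel)"
        unfolding Inn_def set_lebesgue_integral_def
        by (rule integral_eq_nn_integral) (auto simp: indicator_def intro!: AE_I2 Gf_nonneg)
      then have "Inn s = enn2real (I s)" using I1 by simp
      then show ?thesis using True Is by (simp add: ennreal_enn2real less_top)
    qed
  qed
  have "(\<integral>\<^sup>+s. ennreal (indicator {0..} s * Inn s) \<partial>lborel) = (\<integral>\<^sup>+s. I s \<partial>lborel)"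
    by (rule nn_integral_cong_AE[OF key])
  also have "\<dots> = ennreal (suminf tm)" unfolding I_def by (rule double_nn)
  finally have "(\<integral>\<^sup>+s. ennreal (indicator {0..} s * Inn s) \<partial>lborel) = ennreal (suminf tm)" .
  then have "integrable lborel (\<lambda>s. indicator {0..} s * Inn s) \<and> integral\<^sup>L lborel (\<lambda>s. indicator {0..} s * Inn s) = suminf tm"
    by (subst nn_integral_eq_integrable[symmetric])
       (auto intro!: AE_I2 suminf_nonneg summable_tm tm_nonneg simp: indicator_def Inn_nonneg)
  then show ?thesis unfolding Inn_def set_lebesgue_integral_def by simp
qed

end


theorem lemma3p1:
  fixes k l r :: nat and mu theta alpha z :: real and lam :: "nat \<Rightarrow> real"
  assumes "k \<ge> 1" and "l \<ge> 1" and "mu > 0" and "\<forall>m\<in>{1..l}. lam m > 0"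
    and "theta > 0" and "0 < alpha" and "alpha < 1" and "z > 0"
  shows "(LINT s:{0..}|lborel. (LINT t:{0..s}|lborel.
            p0 k l mu lam t * (s - t) ^ r * exp (- (Lam l lam + real k * mu) * (s - t))
            * exp (- s * psi theta alpha z)))
       = (\<Sum>h. \<Sum>w. \<Sum>m\<in>comps l w.
            C0 k l mu lam (Suc h) w m * Gamma (real r + 1)
            / (Lam l lam + real k * mu + psi theta alpha z) ^ (gamma0 k l (Suc h) w m + r + 1))"
proof -
  have psi_pos: "psi theta alpha z > 0"
    unfolding psi_def using assms by (simp add: powr_less_mono2)
  interpret E: EQ2 k l mu lam "psi theta alpha z" r
    using assms psi_pos by unfold_locales auto
  have "(LINT s:{0..}|lborel. (LINT t:{0..s}|lborel.
            p0 k l mu lam t * (s - t) ^ r * exp (- (Lam l lam + real k * mu) * (s - t))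
            * exp (- s * psi theta alpha z))) = suminf E.tm"
    using E.lhs_value unfolding E.Gf_def .
  also have "\<dots> = (\<Sum>h. \<Sum>w. \<Sum>m\<in>comps l w. E.ft ((h, w), m))"
    by (rule E.rhs_series[symmetric])
  finally show ?thesis by (simp add: E.ft_def)
qed

end
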